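(* Let $k$ be a field of characteristic two. Let $\alpha\in k[x]\setminus\{0\}$, $\beta\in k[x,y]\setminus\{0\}$, $\gamma\in k[x,y,z,w]$, let $d:=\gcd_{k[x,y]}(\alpha,\beta)$, $a:=\alpha/d$, $b:=\beta/d$, and set $f_1:=x$, $f_2:=y^2+\alpha y$, $f_3:=z^2+\beta(x,\,y^2+\alpha y)\,z$, $f_4:=az+b(x,\,y^2+\alpha y)\,y$. Let $T$ be the $k$-algebra automorphism of $k[x,y,z,w]$ given by $T(x)=x$, $T(y)=y+\alpha(f_1)$, $T(z)=z+\beta(f_1,f_2)$, $T(w)=w+\gamma(f_1,f_2,f_3,f_4)$. Then $$k[x,y,z]^T = k[f_1,f_2,f_3,f_4].$$
   Context: For a $k$-subalgebra $S$ of $k[x,y,z,w]$ and an automorphism $\sigma$ of $k[x,y,z,w]$, $S^\sigma:=\{f\in S\mid \sigma(f)=f\}$. Notation such as $\beta(x,\,y^2+\alpha y)$ means substituting the given polynomials for the two variables of $\beta$. The gcd is taken in $k[x,y]$ (any choice up to a unit). *)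

theory Defs
  imports "HOL-Computational_Algebra.Computational_Algebra"
begin

text \<open>Multivariate polynomial rings as iterated univariate ones:
  k[x] = 'a poly, k[x,y] = 'a poly poly, k[x,y,z] = 'a poly poly poly,
  k[x,y,z,w] = 'a poly poly poly poly (x innermost, w outermost).\<close>

type_synonym 'a R4 = "'a poly poly poly poly"

definition peval :: "('a::zero \<Rightarrow> 'b::comm_semiring_1) \<Rightarrow> 'a poly \<Rightarrow> 'b \<Rightarrow> 'b" where
  "peval h p v = (\<Sum>i\<le>degree p. h (coeff p i) * v ^ i)"

definition const4 :: "'a::zero \<Rightarrow> 'a R4" where
  "const4 c = [:[:[:[:c:]:]:]:]"

definition subst4 :: "'a::comm_ring_1 R4 \<Rightarrow> 'a R4 \<Rightarrow> 'a R4 \<Rightarrow> 'a R4 \<Rightarrow> 'a R4 \<Rightarrow> 'a R4" where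
  "subst4 f p1 p2 p3 p4 =
     peval (\<lambda>g. peval (\<lambda>h. peval (\<lambda>q. peval const4 q p1) h p2) g p3) f p4"

definition lift1 :: "'a::zero poly \<Rightarrow> 'a R4" where "lift1 p = [:[:[:p:]:]:]"
definition lift2 :: "'a::zero poly poly \<Rightarrow> 'a R4" where "lift2 p = [:[:p:]:]"
definition lift3 :: "'a::zero poly poly poly \<Rightarrow> 'a R4" where "lift3 p = [:p:]"

definition varX :: "'a::comm_ring_1 R4" where "varX = [:[:[:[:0,1:]:]:]:]"
definition varY :: "'a::comm_ring_1 R4" where "varY = [:[:[:0,1:]:]:]"
definition varZ :: "'a::comm_ring_1 R4" where "varZ = [:[:0,1:]:]"
definition varW :: "'a::comm_ring_1 R4" where "varW = [:0,1:]"

definition gen_alg4 :: "'a::comm_ring_1 R4 \<Rightarrow> 'a R4 \<Rightarrow> 'a R4 \<Rightarrow> 'a R4 \<Rightarrow> 'a R4 set" where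
  "gen_alg4 g1 g2 g3 g4 = {subst4 p g1 g2 g3 g4 | p. True}"

definition kxyz :: "'a::comm_ring_1 R4 set" where "kxyz = range lift3"

definition subst_xy :: "'a::comm_ring_1 poly poly \<Rightarrow> 'a R4 \<Rightarrow> 'a R4" where
  "subst_xy \<beta> q = subst4 (lift2 \<beta>) varX q varZ varW"

end

theory Submission
  imports Defs
begin


definition hom :: "('b::ring \<Rightarrow> 'c::ring) \<Rightarrow> bool" where
  "hom f \<longleftrightarrow> (\<forall>p q. f (p+q) = f p + f q) \<and> (\<forall>p q. f (p*q) = f p * f q)"

lemma homD: "hom f \<Longrightarrow> f (p+q) = f p + f q" "hom f \<Longrightarrow> f (p*q) = f p * f q"
  by (auto simp: hom_def)

lemma hom_0: "hom f \<Longrightarrow> f 0 = 0"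
  using homD(1)[of f 0 0] by simp

lemma hom_comp: "hom f \<Longrightarrow> hom g \<Longrightarrow> hom (\<lambda>x. f (g x))"
  by (simp add: hom_def)

lemma hom_sum: "hom f \<Longrightarrow> f (sum g A) = sum (\<lambda>i. f (g i)) A"
  by (induct A rule: infinite_finite_induct) (auto simp: hom_0 homD)

lemma hom_power: "hom f \<Longrightarrow> f 1 = 1 \<Longrightarrow> f (x^n) = f x ^ n"
  by (induct n) (auto simp: homD)

lemma hom_minus: "hom f \<Longrightarrow> f (x - y) = f x - f y"
  by (metis add_diff_cancel homD(1) diff_add_cancel)

lemma poly_induct_gen:
  fixes P :: "'b::comm_ring_1 poly \<Rightarrow> bool"
  assumes "\<And>c. P [:c:]" "P [:0,1:]" "\<And>p q. P p \<Longrightarrow> P q \<Longrightarrow> P (p+q)"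
    "\<And>p q. P p \<Longrightarrow> P q \<Longrightarrow> P (p*q)"
  shows "P p"
proof (induct p)
  case 0 then show ?case using assms(1)[of 0] by simp
next
  case (pCons a p)
  have "pCons a p = [:a:] + [:0,1:] * p" by simp
  then show ?case using assms pCons by metis
qed

lemma hom_unique:
  fixes \<phi> \<psi> :: "'b::comm_ring_1 poly \<Rightarrow> 'c::comm_ring_1"
  assumes "hom \<phi>" "hom \<psi>" "\<And>c. \<phi> [:c:] = \<psi> [:c:]" "\<phi> [:0,1:] = \<psi> [:0,1:]"
  shows "\<phi> p = \<psi> p"
  by (rule poly_induct_gen[of "\<lambda>p. \<phi> p = \<psi> p"]) (use assms in \<open>auto simp: homD\<close>)

lemma hom_pCons_const: "hom (\<lambda>c::'b::comm_ring_1. [:c:])"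
  by (simp add: hom_def)

lemma hom_map_poly:
  fixes h :: "'b::comm_ring_1 \<Rightarrow> 'c::comm_ring_1"
  assumes "hom h" shows "hom (map_poly h)"
proof -
  have h0: "h 0 = 0" using hom_0[OF assms] .
  have "map_poly h (p+q) = map_poly h p + map_poly h q" for p q
    by (rule poly_eqI) (simp add: coeff_map_poly h0 homD[OF assms])
  moreover have "map_poly h (p*q) = map_poly h p * map_poly h q" for p q
    by (rule poly_eqI) (simp add: coeff_map_poly h0 homD[OF assms] coeff_mult hom_sum[OF assms])
  ultimately show ?thesis by (simp add: hom_def)
qed

lemma hom_poly: "hom (\<lambda>p. poly p (v::'b::comm_ring_1))"
  by (simp add: hom_def)

lemma hom_pcompose: "hom (\<lambda>p. pcompose p (q::'b::comm_ring_1 poly))"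
  by (simp add: hom_def pcompose_add pcompose_mult)

lemma peval_poly:
  fixes h :: "'b::zero \<Rightarrow> 'c::comm_semiring_1"
  assumes "h 0 = 0"
  shows "peval h p v = poly (map_poly h p) v"
proof -
  have d: "degree (map_poly h p) \<le> degree p" by (rule map_poly_degree_leq)
  have "poly (map_poly h p) v = (\<Sum>i\<le>degree (map_poly h p). coeff (map_poly h p) i * v ^ i)"
    by (rule poly_altdef)
  also have "\<dots> = (\<Sum>i\<le>degree p. coeff (map_poly h p) i * v ^ i)"
    by (rule sum.mono_neutral_left) (use d in \<open>auto simp: coeff_eq_0\<close>)
  also have "\<dots> = peval h p v"
    by (simp add: peval_def coeff_map_poly assms)
  finally show ?thesis by simp
qed

lemma hom_peval:
  fixes h :: "'b::comm_ring_1 \<Rightarrow> 'c::comm_ring_1"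
  assumes "hom h" shows "hom (\<lambda>p. peval h p v)"
proof -
  have "(\<lambda>p. peval h p v) = (\<lambda>p. poly (map_poly h p) v)"
    using peval_poly hom_0[OF assms] by auto
  then show ?thesis using hom_comp[OF hom_poly hom_map_poly[OF assms]] by simp
qed

lemma peval_const[simp]: "peval h [:c:] v = h c"
  by (simp add: peval_def)

lemma peval_X: "(h::'b::zero_neq_one \<Rightarrow> 'c::comm_semiring_1) 0 = 0 \<Longrightarrow> h 1 = 1 \<Longrightarrow> peval h [:0,1:] v = v"
  by (simp add: peval_def)

lemma hom_const4: "hom (const4 :: 'a::comm_ring_1 \<Rightarrow> 'a R4)"
  by (simp add: hom_def const4_def)

lemma const4_0[simp]: "const4 0 = 0" and const4_1[simp]: "const4 1 = 1"
  by (simp_all add: const4_def pCons_one)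

lemma peval_1[simp]: "peval h 1 v = h 1"
  by (simp add: peval_def)

lemma hom_lift1: "hom (lift1 :: 'a::comm_ring_1 poly \<Rightarrow> 'a R4)"
  by (simp add: hom_def lift1_def)
lemma hom_lift2: "hom (lift2 :: 'a::comm_ring_1 poly poly \<Rightarrow> 'a R4)"
  by (simp add: hom_def lift2_def)
lemma hom_lift3: "hom (lift3 :: 'a::comm_ring_1 poly poly poly \<Rightarrow> 'a R4)"
  by (simp add: hom_def lift3_def)

definition Q4 :: "'a::comm_ring_1 R4 \<Rightarrow> 'a poly \<Rightarrow> 'a R4" where "Q4 v1 q = peval const4 q v1"
definition H4 :: "'a::comm_ring_1 R4 \<Rightarrow> 'a R4 \<Rightarrow> 'a poly poly \<Rightarrow> 'a R4" where
  "H4 v1 v2 h = peval (Q4 v1) h v2"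
definition G4 :: "'a::comm_ring_1 R4 \<Rightarrow> 'a R4 \<Rightarrow> 'a R4 \<Rightarrow> 'a poly poly poly \<Rightarrow> 'a R4" where
  "G4 v1 v2 v3 g = peval (H4 v1 v2) g v3"

lemma subst4_G4: "subst4 f v1 v2 v3 v4 = peval (G4 v1 v2 v3) f v4"
  by (simp add: subst4_def G4_def[abs_def] H4_def[abs_def] Q4_def[abs_def])

lemma hom_Q4: "hom (Q4 v1)" unfolding Q4_def[abs_def] by (rule hom_peval[OF hom_const4])
lemma hom_H4: "hom (H4 v1 v2)" unfolding H4_def[abs_def] by (rule hom_peval[OF hom_Q4])
lemma hom_G4: "hom (G4 v1 v2 v3)" unfolding G4_def[abs_def] by (rule hom_peval[OF hom_H4])
lemma hom_subst4: "hom (\<lambda>f. subst4 f v1 v2 v3 v4)"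
  unfolding subst4_G4 by (rule hom_peval[OF hom_G4])

lemma Q4_1: "Q4 v1 1 = 1" by (simp add: Q4_def)
lemma H4_1: "H4 v1 v2 1 = 1" by (simp add: H4_def Q4_1)
lemma G4_1: "G4 v1 v2 v3 1 = 1" by (simp add: G4_def H4_1)

lemma subst4_lift1: "subst4 (lift1 e) v1 v2 v3 v4 = Q4 v1 e"
  by (simp add: subst4_G4 lift1_def G4_def H4_def)
lemma subst4_lift2: "subst4 (lift2 e) v1 v2 v3 v4 = H4 v1 v2 e"
  by (simp add: subst4_G4 lift2_def G4_def)
lemma subst4_lift3: "subst4 (lift3 e) v1 v2 v3 v4 = G4 v1 v2 v3 e"
  by (simp add: subst4_G4 lift3_def)
lemma subst4_const4: "subst4 (const4 c) v1 v2 v3 v4 = const4 c"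
  by (simp add: subst4_G4 const4_def G4_def H4_def Q4_def)

lemma Q4_X: "Q4 v1 [:0,1:] = (v1 :: 'a::{comm_ring_1,zero_neq_one} R4)"
  unfolding Q4_def by (rule peval_X) auto
lemma H4_X: "H4 v1 v2 [:0,1:] = (v2 :: 'a::{comm_ring_1} R4)"
  unfolding H4_def by (rule peval_X) (auto simp: hom_0[OF hom_Q4] Q4_1)
lemma G4_X: "G4 v1 v2 v3 [:0,1:] = (v3 :: 'a::{comm_ring_1} R4)"
  unfolding G4_def by (rule peval_X) (auto simp: hom_0[OF hom_H4] H4_1)

lemma subst4_X: "subst4 varX v1 v2 v3 v4 = (v1 :: 'a::comm_ring_1 R4)"
  using subst4_lift1[of "[:0,1:]" v1 v2 v3 v4] by (simp add: lift1_def varX_def Q4_X)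
lemma subst4_Y: "subst4 varY v1 v2 v3 v4 = (v2 :: 'a::comm_ring_1 R4)"
  using subst4_lift2[of "[:0,1:]" v1 v2 v3 v4] by (simp add: lift2_def varY_def H4_X)
lemma subst4_Z: "subst4 varZ v1 v2 v3 v4 = (v3 :: 'a::comm_ring_1 R4)"
  using subst4_lift3[of "[:0,1:]" v1 v2 v3 v4] by (simp add: lift3_def varZ_def G4_X)
lemma subst4_W: "subst4 varW v1 v2 v3 v4 = (v4 :: 'a::comm_ring_1 R4)"
  unfolding subst4_G4 varW_def by (rule peval_X) (auto simp: hom_0[OF hom_G4] G4_1)

lemma char2_add_self:
  assumes "CHAR('b::comm_ring_1) = 2" shows "(x::'b) + x = 0"
proof -
  have "(of_nat CHAR('b)::'b) = 0" by (rule of_nat_CHAR)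
  then have "(of_nat 2::'b) = 0" unfolding assms .
  then have "(2::'b) = 0" by simp
  then have "2 * x = 0" by simp
  then show ?thesis by (simp only: mult_2)
qed

lemma char2_minus:
  assumes "CHAR('b::comm_ring_1) = 2" shows "- (x::'b) = x"
  using char2_add_self[OF assms, of x] by (metis add_eq_0_iff)




lemma small_decomp:
  fixes p :: "'b::comm_ring_1 poly"
  assumes "degree p < 2" shows "p = [:coeff p 0:] + [:0,1:] * [:coeff p 1:]"
proof (rule poly_eqI)
  fix n show "coeff p n = coeff ([:coeff p 0:] + [:0,1:] * [:coeff p 1:]) n"
  proof (cases n)
    case (Suc m) then show ?thesis
      using assms by (cases m) (auto simp: coeff_eq_0)
  qed simp
qed

lemma decomp:
  fixes g :: "'b::idom poly"
  assumes dg: "degree g = 2" and lg: "lead_coeff g = 1"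
  shows "\<exists>P Q. p = pcompose P g + [:0,1:] * pcompose Q g"
proof (induct "degree p" arbitrary: p rule: less_induct)
  case less
  show ?case
  proof (cases "degree p < 2")
    case True then show ?thesis using small_decomp[OF True] by (metis pcompose_const)
  next
    case False
    obtain q r where qr: "pseudo_divmod p g = (q,r)" by (cases "pseudo_divmod p g")
    have g0: "g \<noteq> 0" using dg by auto
    from pseudo_divmod[OF g0 qr] dg lg have e: "p = g*q + r" and r: "r = 0 \<or> degree r < 2" by auto
    have dr: "degree r < 2" using r by auto
    have dq: "degree q < degree p"
    proof (cases "q = 0")
      case True then show ?thesis using False by simp
    next
      case q0: False
      have "degree (g*q) = 2 + degree q" using degree_mult_eq[OF g0 q0] dg by simp
      moreover have "g * q = p + (- r)" using e by simp
      moreover have "degree (p + (- r)) = degree p"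
        by (rule degree_add_eq_left) (use dr False in simp)
      ultimately show ?thesis by simp
    qed
    obtain P Q where PQ: "q = pcompose P g + [:0,1:] * pcompose Q g" using less dq by blast
    have rr: "r = [:coeff r 0:] + [:0,1:] * [:coeff r 1:]" using small_decomp[OF dr] .
    have "p = pcompose (pCons (coeff r 0) P) g + [:0,1:] * pcompose (pCons (coeff r 1) Q) g"
      apply (subst e, subst rr, subst PQ)
      by (simp add: pcompose_pCons algebra_simps)
    then show ?thesis by blast
  qed
qed

lemma decomp_unique:
  fixes g :: "'b::idom poly"
  assumes dg: "degree g = 2" and e: "pcompose P g + [:0,1:] * pcompose Q g = 0"
  shows "P = 0 \<and> Q = 0"
proof -
  have Q0: "Q = 0"
  proof (rule ccontr)
    assume Q0: "Q \<noteq> 0"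
    have c0: "pcompose Q g \<noteq> 0" using pcompose_eq_0[of Q g] Q0 dg by auto
    have "degree ([:0,1:] * pcompose Q g) = 1 + 2 * degree Q"
      using degree_mult_eq[OF _ c0, of "[:0,1:]"] degree_pcompose[of Q g] dg by simp
    moreover have "pcompose P g = - ([:0,1:] * pcompose Q g)" by (rule iffD2[OF eq_neg_iff_add_eq_0]) (rule e)
    then have "degree (pcompose P g) = degree ([:0,1:] * pcompose Q g)" by simp
    moreover have "degree (pcompose P g) = 2 * degree P" using degree_pcompose[of P g] dg by simp
    ultimately show False by presburger
  qed
  then have "pcompose P g = 0" using e by simp
  then have "P = 0" using pcompose_eq_0[of P g] dg by auto
  then show ?thesis using Q0 by simp
qed

lemma map_poly_const: "h 0 = 0 \<Longrightarrow> map_poly h [:a:] = [:h a:]"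
  by (simp add: map_poly_pCons)

lemma map_poly_pcompose:
  fixes h :: "'b::comm_ring_1 \<Rightarrow> 'c::comm_ring_1"
  assumes "hom h"
  shows "map_poly h (pcompose P g) = pcompose (map_poly h P) (map_poly h g)"
proof (induct P)
  case 0 then show ?case by simp
next
  case (pCons a P)
  have h0: "h 0 = 0" using hom_0[OF assms] .
  have "map_poly h (pcompose (pCons a P) g) = map_poly h [:a:] + map_poly h g * map_poly h (pcompose P g)"
    by (simp add: pcompose_pCons homD[OF hom_map_poly[OF assms]])
  also have "\<dots> = pcompose (map_poly h (pCons a P)) (map_poly h g)"
    using pCons by (simp add: map_poly_pCons h0 pcompose_pCons map_poly_const)
  finally show ?case .
qed




locale L =
  fixes \<alpha> :: "'a::field_gcd poly" and \<beta> :: "'a poly poly"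
  assumes ch: "CHAR('a) = 2" and a0: "\<alpha> \<noteq> 0" and b0: "\<beta> \<noteq> 0"
begin

definition "fy = [:0, \<alpha>, 1:]"
definition "s1 p = pcompose p [:\<alpha>,1:]"
definition "bp = pcompose \<beta> fy"
definition "s2 p = pcompose (map_poly s1 p) [:bp, 1:]"
definition "dd = gcd [:\<alpha>:] \<beta>"
definition "aa = [:\<alpha>:] div dd"
definition "bb = \<beta> div dd"
definition "f3c = [:0, bp, 1:]"
definition "g4c = [:[:0,1:] * pcompose bb fy, aa:]"

lemma ch1: "(x::'a poly) + x = 0" by (rule char2_add_self) (simp add: ch)
lemma ch2: "(x::'a poly poly) + x = 0" by (rule char2_add_self) (simp add: ch)
lemma ch3: "(x::'a poly poly poly) + x = 0" by (rule char2_add_self) (simp add: ch)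
lemma ch2m: "- (x::'a poly poly) = x" by (rule char2_minus) (simp add: ch)

lemma hom_s1: "hom s1" unfolding s1_def[abs_def] by (rule hom_pcompose)
lemma s1_0[simp]: "s1 0 = 0" and s1_1[simp]: "s1 1 = 1" and s1_const[simp]: "s1 [:c:] = [:c:]"
  by (simp_all add: s1_def pcompose_1)
lemma s1_X: "s1 [:0,1:] = [:\<alpha>,1:]" by (simp add: s1_def pcompose_pCons)

lemma s1_fy: "s1 fy = fy"
  by (simp add: s1_def fy_def pcompose_pCons algebra_simps ch1)

lemma s1_comp: "s1 (pcompose p fy) = pcompose p fy"
  by (simp add: s1_def pcompose_assoc[symmetric] s1_fy[unfolded s1_def])

lemma s1_bp: "s1 bp = bp" by (simp add: bp_def s1_comp)

lemma fy_deg: "degree fy = 2" and fy_lead: "lead_coeff fy = 1"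
  by (simp_all add: fy_def)
lemma f3c_deg: "degree f3c = 2" and f3c_lead: "lead_coeff f3c = 1"
  by (simp_all add: f3c_def)

lemma hom_s2: "hom s2"
  unfolding s2_def[abs_def] by (rule hom_comp[OF hom_pcompose hom_map_poly[OF hom_s1]])

lemma s2_const[simp]: "s2 [:c:] = [:s1 c:]"
  by (simp add: s2_def map_poly_const)
lemma s2_X: "s2 [:0,1:] = [:bp,1:]"
  by (simp add: s2_def map_poly_pCons pcompose_pCons)

lemma s2_f3c: "s2 f3c = f3c"
proof -
  have "map_poly s1 f3c = f3c" by (simp add: f3c_def map_poly_pCons s1_bp)
  then show ?thesis by (simp add: s2_def f3c_def pcompose_pCons algebra_simps ch2)
qed

lemma s2_comp: "s2 (pcompose P f3c) = pcompose (map_poly s1 P) f3c"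
proof -
  have "s2 (pcompose P f3c) = pcompose (pcompose (map_poly s1 P) (map_poly s1 f3c)) [:bp,1:]"
    by (simp add: s2_def map_poly_pcompose[OF hom_s1])
  also have "\<dots> = pcompose (map_poly s1 P) (s2 f3c)"
    by (simp add: s2_def pcompose_assoc)
  finally show ?thesis by (simp add: s2_f3c)
qed

lemma inv_B:
  assumes "s1 p = p" shows "\<exists>P. p = pcompose P fy"
proof -
  obtain P Q where e: "p = pcompose P fy + [:0,1:] * pcompose Q fy"
    using decomp[OF fy_deg fy_lead] by blast
  have "s1 p = s1 (pcompose P fy) + s1 [:0,1:] * s1 (pcompose Q fy)"
    by (simp only: e homD[OF hom_s1])
  then have "s1 p = pcompose P fy + [:\<alpha>,1:] * pcompose Q fy"
    by (simp only: s1_comp s1_X)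
  then have "[:\<alpha>:] * pcompose Q fy = 0" using assms e by (simp add: algebra_simps)
  then have "pcompose Q fy = 0" using a0 by simp
  then show ?thesis using e by auto
qed

lemma dd_props: "dd \<noteq> 0" "aa * dd = [:\<alpha>:]" "bb * dd = \<beta>" "degree dd = 0" "degree aa = 0" "aa \<noteq> 0"
  "coprime aa bb"
proof -
  show dd0: "dd \<noteq> 0" using a0 by (simp add: dd_def)
  show ad: "aa * dd = [:\<alpha>:]" by (simp add: aa_def dd_def)
  show "bb * dd = \<beta>" by (simp add: bb_def dd_def)
  have "degree (aa * dd) = 0" using ad by simp
  moreover have "aa \<noteq> 0" using ad a0 by auto
  ultimately show "degree dd = 0" "degree aa = 0" "aa \<noteq> 0" using degree_mult_eq[of aa dd] dd0 by auto
  show "coprime aa bb" unfolding aa_def bb_def dd_def by (rule div_gcd_coprime) (use a0 in simp)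
qed

lemma deg0_comp: "degree (c::'a poly poly) = 0 \<Longrightarrow> pcompose c q = c"
  by (metis degree_0_id pcompose_const)

lemma coef:
  assumes q: "s1 q0 = q0" and p: "p0 = s1 p0 + bp * q0"
  shows "\<exists>u r. p0 = pcompose u fy + [:0,1:] * pcompose (bb*r) fy \<and> q0 = pcompose (aa*r) fy"
proof -
  obtain q where qd: "q0 = pcompose q fy" using inv_B[OF q] by blast
  obtain u v where e: "p0 = pcompose u fy + [:0,1:] * pcompose v fy"
    using decomp[OF fy_deg fy_lead] by blast
  have "s1 p0 = s1 (pcompose u fy) + s1 [:0,1:] * s1 (pcompose v fy)"
    by (simp only: e homD[OF hom_s1])
  then have "s1 p0 = pcompose u fy + [:\<alpha>,1:] * pcompose v fy"
    by (simp only: s1_comp s1_X)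
  then have "[:\<alpha>:] * pcompose v fy + bp * q0 = 0" using p e
    by (simp add: algebra_simps)
  then have "pcompose ([:\<alpha>:] * v + \<beta> * q) fy = 0"
    by (simp add: pcompose_add pcompose_mult pcompose_smult bp_def qd)
  then have "[:\<alpha>:] * v + \<beta> * q = 0" using pcompose_eq_0[of _ fy] fy_deg by auto
  then have "[:\<alpha>:] * v = - (\<beta> * q)" by (simp add: eq_neg_iff_add_eq_0)
  then have "[:\<alpha>:] * v = \<beta> * q" by (simp add: ch2m)
  then have "dd * (aa * v) = dd * (bb * q)" using dd_props(2,3) by (simp add: algebra_simps)
  then have avbq: "aa * v = bb * q" using dd_props(1) by simp
  then have "aa dvd bb * q" by (metis dvd_triv_left)
  then have "aa dvd q" using dd_props(7) by (simp add: coprime_dvd_mult_right_iff)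
  then obtain r where qr: "q = aa * r" by blast
  then have "v = bb * r" using avbq dd_props(6) by (simp add: algebra_simps)
  then show ?thesis using e qd qr by blast
qed

end



inductive_set alg :: "'a::comm_ring_1 R4 \<Rightarrow> 'a R4 \<Rightarrow> 'a R4 \<Rightarrow> 'a R4 \<Rightarrow> 'a R4 set"
  for g1 g2 g3 g4 where
  c: "const4 c \<in> alg g1 g2 g3 g4"
| g1: "g1 \<in> alg g1 g2 g3 g4"
| g2: "g2 \<in> alg g1 g2 g3 g4"
| g3: "g3 \<in> alg g1 g2 g3 g4"
| g4: "g4 \<in> alg g1 g2 g3 g4"
| add: "x \<in> alg g1 g2 g3 g4 \<Longrightarrow> y \<in> alg g1 g2 g3 g4 \<Longrightarrow> x + y \<in> alg g1 g2 g3 g4"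
| mult: "x \<in> alg g1 g2 g3 g4 \<Longrightarrow> y \<in> alg g1 g2 g3 g4 \<Longrightarrow> x * y \<in> alg g1 g2 g3 g4"

lemma R4_induct:
  fixes P :: "'a::comm_ring_1 R4 \<Rightarrow> bool"
  assumes c: "\<And>c. P (const4 c)" and x: "P varX" and y: "P varY" and z: "P varZ" and w: "P varW"
    and add: "\<And>p q. P p \<Longrightarrow> P q \<Longrightarrow> P (p+q)" and mult: "\<And>p q. P p \<Longrightarrow> P q \<Longrightarrow> P (p*q)"
  shows "P f"
proof -
  have 1: "P (lift1 e)" for e
    apply (rule poly_induct_gen[of "\<lambda>e. P (lift1 e)"])
    subgoal for c using c[of c] by (simp add: lift1_def const4_def)
    subgoal using x by (simp add: lift1_def varX_def)
    subgoal for p q using add by (simp add: homD[OF hom_lift1])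
    subgoal for p q using mult by (simp add: homD[OF hom_lift1])
    done
  have 2: "P (lift2 e)" for e
    apply (rule poly_induct_gen[of "\<lambda>e. P (lift2 e)"])
    subgoal for c using 1[of c] by (simp add: lift1_def lift2_def)
    subgoal using y by (simp add: lift2_def varY_def)
    subgoal for p q using add by (simp add: homD[OF hom_lift2])
    subgoal for p q using mult by (simp add: homD[OF hom_lift2])
    done
  have 3: "P (lift3 e)" for e
    apply (rule poly_induct_gen[of "\<lambda>e. P (lift3 e)"])
    subgoal for c using 2[of c] by (simp add: lift3_def lift2_def)
    subgoal using z by (simp add: lift3_def varZ_def)
    subgoal for p q using add by (simp add: homD[OF hom_lift3])
    subgoal for p q using mult by (simp add: homD[OF hom_lift3])
    done
  show ?thesis
    apply (rule poly_induct_gen[of P])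
    subgoal for c using 3[of c] by (simp add: lift3_def)
    subgoal using w by (simp add: varW_def)
    subgoal for p q using add by simp
    subgoal for p q using mult by simp
    done
qed

lemma gen_alg4_eq: "gen_alg4 g1 g2 g3 g4 = alg g1 g2 g3 g4"
proof
  show "gen_alg4 g1 g2 g3 g4 \<subseteq> alg g1 g2 g3 g4"
  proof
    fix f assume "f \<in> gen_alg4 g1 g2 g3 g4"
    then obtain p where f: "f = subst4 p g1 g2 g3 g4" by (auto simp: gen_alg4_def)
    have "subst4 p g1 g2 g3 g4 \<in> alg g1 g2 g3 g4"
      apply (rule R4_induct[of "\<lambda>p. subst4 p g1 g2 g3 g4 \<in> alg g1 g2 g3 g4"])
      apply (simp_all only: subst4_const4 subst4_X subst4_Y subst4_Z subst4_W homD[OF hom_subst4])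
      by (rule alg.c alg.g1 alg.g2 alg.g3 alg.g4 alg.add alg.mult | assumption)+
    then show "f \<in> alg g1 g2 g3 g4" using f by simp
  qed
next
  show "alg g1 g2 g3 g4 \<subseteq> gen_alg4 g1 g2 g3 g4"
  proof
    fix f assume "f \<in> alg g1 g2 g3 g4"
    then show "f \<in> gen_alg4 g1 g2 g3 g4"
    proof induct
      case (c c) then show ?case unfolding gen_alg4_def
        by (intro CollectI exI[of _ "const4 c"]) (simp add: subst4_const4)
    next
      case g1 then show ?case unfolding gen_alg4_def
        by (intro CollectI exI[of _ "varX"]) (simp add: subst4_X)
    next
      case g2 then show ?case unfolding gen_alg4_def
        by (intro CollectI exI[of _ "varY"]) (simp add: subst4_Y)
    next
      case g3 then show ?case unfolding gen_alg4_def
        by (intro CollectI exI[of _ "varZ"]) (simp add: subst4_Z)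
    next
      case g4 then show ?case unfolding gen_alg4_def
        by (intro CollectI exI[of _ "varW"]) (simp add: subst4_W)
    next
      case (add x y)
      then obtain p q where "x = subst4 p g1 g2 g3 g4" "y = subst4 q g1 g2 g3 g4"
        unfolding gen_alg4_def by blast
      then show ?case unfolding gen_alg4_def
        by (intro CollectI exI[of _ "p+q"]) (simp add: homD(1)[OF hom_subst4])
    next
      case (mult x y)
      then obtain p q where "x = subst4 p g1 g2 g3 g4" "y = subst4 q g1 g2 g3 g4"
        unfolding gen_alg4_def by blast
      then show ?case unfolding gen_alg4_def
        by (intro CollectI exI[of _ "p*q"]) (simp add: homD(2)[OF hom_subst4])
    qed
  qed
qed




context L begin

definition "F2 = varY^2 + lift1 \<alpha> * varY"
definition "F3 = varZ^2 + subst_xy \<beta> F2 * varZ"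
definition "F4 = lift2 aa * varZ + subst_xy bb F2 * varY"
definition "TT v4 f = subst4 f varX (varY + lift1 \<alpha>) (varZ + subst_xy \<beta> F2) v4"

lemma lift1_0[simp]: "lift1 0 = 0" and lift1_1[simp]: "lift1 1 = 1"
  by (simp_all add: lift1_def pCons_one)
lemma lift2_0[simp]: "lift2 0 = 0" and lift2_1[simp]: "lift2 1 = 1"
  by (simp_all add: lift2_def pCons_one)
lemma lift3_0[simp]: "lift3 0 = 0" and lift3_1[simp]: "lift3 1 = 1"
  by (simp_all add: lift3_def pCons_one)

lemma Q4_varX: "Q4 varX e = lift1 e"
  apply (rule hom_unique[OF hom_Q4 hom_lift1])
  subgoal for c by (simp add: Q4_def lift1_def const4_def)
  subgoal by (simp add: Q4_X lift1_def varX_def)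
  done

lemma H4_varX: "H4 varX v2 e = peval lift1 e v2"
proof -
  have e: "Q4 varX = lift1" by (rule ext) (rule Q4_varX)
  show ?thesis unfolding H4_def e ..
qed

lemma lift2_const: "lift2 [:c:] = lift1 c" by (simp add: lift1_def lift2_def)
lemma lift3_const: "lift3 [:c:] = lift2 c" by (simp add: lift3_def lift2_def)
lemma lift2_X: "lift2 [:0,1:] = varY" by (simp add: lift2_def varY_def)
lemma lift3_X: "lift3 [:0,1:] = varZ" by (simp add: lift3_def varZ_def)

lemma Y_shift: "peval lift1 e (varY + lift1 \<alpha>) = lift2 (s1 e)"
  apply (rule hom_unique[OF hom_peval[OF hom_lift1] hom_comp[OF hom_lift2 hom_s1]])
  subgoal for c by (simp add: lift2_const)
  subgoal
  proof -
    have "[:\<alpha>,1:] = [:\<alpha>:] + [:0,1:]" by simp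
    then have "lift2 [:\<alpha>,1:] = lift1 \<alpha> + varY" by (simp only: homD[OF hom_lift2] lift2_const lift2_X)
    then show ?thesis by (simp add: peval_X s1_X)
  qed
  done

lemma F2_eq: "F2 = lift2 fy"
proof -
  have "fy = [:0,1:]*[:0,1:] + [:\<alpha>:]*[:0,1:]" by (simp add: fy_def)
  then have "lift2 fy = varY * varY + lift1 \<alpha> * varY"
    by (simp only: homD[OF hom_lift2] lift2_const lift2_X)
  then show ?thesis by (simp add: F2_def power2_eq_square)
qed

lemma fy_shift: "peval lift1 e F2 = lift2 (pcompose e fy)"
  apply (rule hom_unique[OF hom_peval[OF hom_lift1] hom_comp[OF hom_lift2 hom_pcompose]])
  subgoal for c by (simp add: lift2_const)
  subgoal by (simp add: peval_X pcompose_pCons F2_eq)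
  done

lemma subst_xy_F2: "subst_xy e F2 = lift2 (pcompose e fy)"
  by (simp add: subst_xy_def subst4_lift2 H4_varX fy_shift)

lemma F3_eq: "F3 = lift3 f3c"
proof -
  have "f3c = [:0,1:]*[:0,1:] + [:bp:]*[:0,1:]" by (simp add: f3c_def)
  then have "lift3 f3c = varZ * varZ + lift2 bp * varZ"
    by (simp only: homD[OF hom_lift3] lift3_const lift3_X)
  then show ?thesis by (simp add: F3_def power2_eq_square subst_xy_F2 bp_def)
qed

lemma F4_eq: "F4 = lift3 g4c"
proof -
  have "g4c = [:[:0,1:] * pcompose bb fy:] + [:0,1:]*[:aa:]" by (simp add: g4c_def)
  then have "lift3 g4c = varY * lift2 (pcompose bb fy) + varZ * lift2 aa"
    by (simp only: homD[OF hom_lift3] homD[OF hom_lift2] lift3_const lift3_X lift2_X)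
  then show ?thesis by (simp add: F4_def subst_xy_F2 algebra_simps)
qed

lemma F1_eq: "varX = lift3 [:[:[:0,1:]:]:]" by (simp add: lift3_def varX_def)

lemma TT_lift3: "TT v4 (lift3 e) = lift3 (s2 e)"
proof -
  have H: "H4 varX (varY + lift1 \<alpha>) = (\<lambda>h. lift2 (s1 h))"
    by (rule ext) (simp add: H4_varX Y_shift)
  have "TT v4 (lift3 e) = peval (\<lambda>h. lift2 (s1 h)) e (varZ + lift2 bp)"
    by (simp add: TT_def subst4_lift3 G4_def H subst_xy_F2 bp_def)
  also have "\<dots> = lift3 (s2 e)"
    apply (rule hom_unique[OF hom_peval[OF hom_comp[OF hom_lift2 hom_s1]] hom_comp[OF hom_lift3 hom_s2]])
    subgoal for c by (simp add: lift3_const)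
    subgoal
    proof -
      have "[:bp,1:] = [:bp:] + [:0,1:]" by simp
      then have "lift3 [:bp,1:] = lift2 bp + varZ" by (simp only: homD[OF hom_lift3] lift3_const lift3_X)
      then show ?thesis by (simp add: peval_X s2_X add.commute)
    qed
    done
  finally show ?thesis .
qed

lemma hom_TT: "hom (TT v4)" unfolding TT_def[abs_def] by (rule hom_subst4)
lemma TT_const: "TT v4 (const4 c) = const4 c" by (simp add: TT_def subst4_const4)

end



context L begin

abbreviation "AL \<equiv> alg varX F2 F3 F4"

lemma bp0: "bp \<noteq> 0"
  using pcompose_eq_0[of \<beta> fy] fy_deg b0 by (auto simp: bp_def)

lemma s2_g4c: "s2 g4c = g4c"
proof -
  let ?b = "pcompose bb fy"
  have sa: "s1 aa = aa" using dd_props(5) by (simp add: s1_def deg0_comp)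
  have sb: "s1 ?b = ?b" by (rule s1_comp)
  have "s1 ([:0,1:] * ?b) = s1 [:0,1:] * s1 ?b" by (rule homD(2)[OF hom_s1])
  then have s0': "s1 ([:0,1:] * ?b) = [:\<alpha>,1:] * ?b" by (simp only: s1_X sb)
  have "[:0,1:] * ?b = pCons 0 ?b" by simp
  then have s0: "s1 (pCons 0 ?b) = [:\<alpha>,1:] * ?b" using s0' by simp
  have m: "map_poly s1 g4c = [:[:\<alpha>,1:] * ?b, aa:]"
    by (simp add: g4c_def map_poly_pCons s0 sa dd_props(6))
  have "bp = pcompose (bb * dd) fy" by (simp add: bp_def dd_props(3))
  then have "bp = ?b * dd" using dd_props(4) by (simp add: pcompose_mult deg0_comp)
  then have "bp * aa = ?b * (aa * dd)" by (simp only: mult_ac)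
  then have "bp * aa = ?b * [:\<alpha>:]" using dd_props(2) by simp
  then have key: "[:\<alpha>,1:] * ?b + bp * aa = [:0,1:] * ?b"
    by (simp add: algebra_simps ch2[of "smult \<alpha> ?b", simplified])
  have "s2 g4c = [:[:\<alpha>,1:] * ?b + bp * aa, aa:]"
    by (simp add: s2_def m pcompose_pCons algebra_simps)
  then have "s2 g4c = [:[:0,1:] * ?b, aa:]" unfolding key .
  then show ?thesis by (simp only: g4c_def)
qed

lemma M_A: "lift1 e \<in> AL"
  apply (rule poly_induct_gen[of "\<lambda>e. lift1 e \<in> AL"])
  subgoal for c using alg.c[of c] by (simp add: lift1_def const4_def)
  subgoal using alg.g1 by (simp add: lift1_def varX_def)
  subgoal for p q by (simp add: homD[OF hom_lift1] alg.add)
  subgoal for p q by (simp add: homD[OF hom_lift1] alg.mult)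
  done

lemma M_B: "lift2 (pcompose c fy) \<in> AL"
  apply (rule poly_induct_gen[of "\<lambda>c. lift2 (pcompose c fy) \<in> AL"])
  subgoal for c by (simp add: lift2_const M_A)
  subgoal by (simp add: pcompose_pCons F2_eq[symmetric] alg.g2)
  subgoal for p q by (simp add: pcompose_add homD[OF hom_lift2] alg.add)
  subgoal for p q by (simp add: pcompose_mult homD[OF hom_lift2] alg.mult)
  done

lemma M_coef:
  assumes "s1 q0 = q0" "p0 = s1 p0 + bp * q0"
  shows "lift3 ([:p0:] + [:0,1:] * [:q0:]) \<in> AL"
proof -
  obtain u r where e: "p0 = pcompose u fy + [:0,1:] * pcompose (bb*r) fy" "q0 = pcompose (aa*r) fy"
    using coef[OF assms] by blast
  have aa': "pcompose aa fy = aa" using dd_props(5) by (rule deg0_comp)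
  have "[:p0:] + [:0,1:] * [:q0:] = [:pcompose u fy:] + [:pcompose r fy:] * g4c"
    by (simp add: e g4c_def pcompose_mult aa' algebra_simps)
  then have "lift3 ([:p0:] + [:0,1:] * [:q0:]) = lift2 (pcompose u fy) + lift2 (pcompose r fy) * F4"
    by (simp only: homD[OF hom_lift3] lift3_const F4_eq)
  then show ?thesis by (simp add: alg.add alg.mult alg.g4 M_B)
qed

lemma M5:
  "\<forall>Q. (\<forall>i. s1 (coeff Q i) = coeff Q i \<and> coeff P i = s1 (coeff P i) + bp * coeff Q i) \<longrightarrow>
     lift3 (pcompose P f3c + [:0,1:] * pcompose Q f3c) \<in> AL"
proof (induct P)
  case 0
  show ?case
  proof (intro allI impI)
    fix Q assume h: "\<forall>i. s1 (coeff Q i) = coeff Q i \<and> coeff 0 i = s1 (coeff 0 i) + bp * coeff Q i"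
    have "Q = 0" using h bp0 by (auto intro: poly_eqI)
    then show "lift3 (pcompose 0 f3c + [:0,1:] * pcompose Q f3c) \<in> AL"
      using alg.c[of 0 varX F2 F3 F4] by simp
  qed
next
  case (pCons a P)
  show ?case
  proof (intro allI impI)
    fix Q assume h: "\<forall>i. s1 (coeff Q i) = coeff Q i \<and>
        coeff (pCons a P) i = s1 (coeff (pCons a P) i) + bp * coeff Q i"
    obtain q0 Q' where Q: "Q = pCons q0 Q'" by (rule pCons_cases)
    have h0: "s1 q0 = q0" "a = s1 a + bp * q0" using h[rule_format, of 0] by (auto simp: Q)
    have hs: "\<forall>i. s1 (coeff Q' i) = coeff Q' i \<and> coeff P i = s1 (coeff P i) + bp * coeff Q' i"
      using h Q by (metis coeff_pCons_Suc)
    have IH: "lift3 (pcompose P f3c + [:0,1:] * pcompose Q' f3c) \<in> AL" using pCons(2) hs by blast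
    have "pcompose (pCons a P) f3c + [:0,1:] * pcompose Q f3c =
      ([:a:] + [:0,1:] * [:q0:]) + f3c * (pcompose P f3c + [:0,1:] * pcompose Q' f3c)"
      by (simp add: Q pcompose_pCons algebra_simps)
    then have "lift3 (pcompose (pCons a P) f3c + [:0,1:] * pcompose Q f3c) =
      lift3 ([:a:] + [:0,1:] * [:q0:]) + F3 * lift3 (pcompose P f3c + [:0,1:] * pcompose Q' f3c)"
      by (simp only: homD[OF hom_lift3] F3_eq)
    then show "lift3 (pcompose (pCons a P) f3c + [:0,1:] * pcompose Q f3c) \<in> AL"
      using M_coef[OF h0] IH by (simp add: alg.add alg.mult alg.g3)
  qed
qed

lemma inv_in_alg:
  assumes "s2 p = p" shows "lift3 p \<in> AL"
proof -
  obtain P Q where e: "p = pcompose P f3c + [:0,1:] * pcompose Q f3c"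
    using decomp[OF f3c_deg f3c_lead] by blast
  let ?P = "map_poly s1 P" and ?Q = "map_poly s1 Q"
  have "s2 p = s2 (pcompose P f3c) + s2 [:0,1:] * s2 (pcompose Q f3c)"
    by (simp only: e homD[OF hom_s2])
  then have "s2 p = pcompose ?P f3c + [:bp,1:] * pcompose ?Q f3c"
    by (simp only: s2_comp s2_X)
  then have "pcompose P f3c + [:0,1:] * pcompose Q f3c = pcompose ?P f3c + [:bp,1:] * pcompose ?Q f3c"
    using assms e by simp
  then have h: "pcompose P f3c + [:0,1:] * pcompose Q f3c - (pcompose ?P f3c + [:bp,1:] * pcompose ?Q f3c) = 0"
    by simp
  have i1: "[:bp,1:] = [:bp:] + [:0,1:]" by simp
  have i2: "pcompose (smult bp ?Q) f3c = [:bp:] * pcompose ?Q f3c" by (simp add: pcompose_smult)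
  have "pcompose (P - ?P - smult bp ?Q) f3c + [:0,1:] * pcompose (Q - ?Q) f3c =
     pcompose P f3c + [:0,1:] * pcompose Q f3c - (pcompose ?P f3c + [:bp,1:] * pcompose ?Q f3c)"
    unfolding i1 pcompose_diff i2 by algebra
  then have "pcompose (P - ?P - smult bp ?Q) f3c + [:0,1:] * pcompose (Q - ?Q) f3c = 0"
    using h by simp
  then have "P - ?P - smult bp ?Q = 0 \<and> Q - ?Q = 0" by (rule decomp_unique[OF f3c_deg])
  then have c1: "P - ?P - smult bp ?Q = 0" and c2: "Q - ?Q = 0" by auto
  have "P - (?P + smult bp ?Q) = 0" using c1 by (simp only: diff_diff_eq)
  then have PQ1: "P = ?P + smult bp ?Q" by (simp only: right_minus_eq)
  have PQ2: "Q = ?Q" using c2 by (simp only: right_minus_eq)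
  note PQ = PQ1 PQ2
  have "\<forall>i. s1 (coeff Q i) = coeff Q i \<and> coeff P i = s1 (coeff P i) + bp * coeff Q i"
  proof
    fix i
    have c1: "coeff Q i = s1 (coeff Q i)" using arg_cong[OF PQ(2), of "\<lambda>x. coeff x i"]
      by (simp add: coeff_map_poly)
    have "coeff P i = s1 (coeff P i) + bp * s1 (coeff Q i)"
      using arg_cong[OF PQ(1), of "\<lambda>x. coeff x i"] by (simp add: coeff_map_poly)
    then show "s1 (coeff Q i) = coeff Q i \<and> coeff P i = s1 (coeff P i) + bp * coeff Q i"
      using c1 by simp
  qed
  then show ?thesis using M5 e by blast
qed

lemma gens_inv: "s2 [:[:[:0,1:]:]:] = [:[:[:0,1:]:]:]" "s2 [:fy:] = [:fy:]"
  by (simp_all add: s1_fy)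

lemma main: "{f \<in> kxyz. TT v4 f = f} = AL"
proof
  show "{f \<in> kxyz. TT v4 f = f} \<subseteq> AL"
  proof
    fix f assume "f \<in> {f \<in> kxyz. TT v4 f = f}"
    then obtain p where f: "f = lift3 p" and t: "TT v4 f = f" by (auto simp: kxyz_def)
    have "lift3 (s2 p) = lift3 p" using t f TT_lift3 by simp
    then have "s2 p = p" by (simp add: lift3_def)
    then show "f \<in> AL" using inv_in_alg f by simp
  qed
next
  show "AL \<subseteq> {f \<in> kxyz. TT v4 f = f}"
  proof
    fix f assume "f \<in> AL"
    then show "f \<in> {f \<in> kxyz. TT v4 f = f}"
    proof induct
      case (c c)
      have "const4 c = lift3 [:[:[:c:]:]:]" by (simp add: const4_def lift3_def)
      then have "const4 c \<in> kxyz" unfolding kxyz_def by (metis rangeI)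
      then show ?case by (simp add: TT_const)
    next
      case g1 then show ?case
        by (simp only: F1_eq TT_lift3 gens_inv kxyz_def mem_Collect_eq rangeI conj_absorb simp_thms)
    next
      case g2 then show ?case
        by (simp only: F2_eq lift3_const[symmetric] TT_lift3 gens_inv kxyz_def mem_Collect_eq rangeI simp_thms)
    next
      case g3 then show ?case
        by (simp only: F3_eq TT_lift3 s2_f3c kxyz_def mem_Collect_eq rangeI simp_thms)
    next
      case g4 then show ?case
        by (simp only: F4_eq TT_lift3 s2_g4c kxyz_def mem_Collect_eq rangeI simp_thms)
    next
      case (add x y)
      then obtain p q where "x = lift3 p" "y = lift3 q" by (auto simp: kxyz_def)
      then have "x + y = lift3 (p + q)" by (simp add: homD[OF hom_lift3])
      then have "x + y \<in> kxyz" unfolding kxyz_def by (metis rangeI)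
      moreover have "TT v4 (x + y) = x + y" using add by (simp add: homD[OF hom_TT])
      ultimately show ?case by simp
    next
      case (mult x y)
      then obtain p q where "x = lift3 p" "y = lift3 q" by (auto simp: kxyz_def)
      then have "x * y = lift3 (p * q)" by (simp add: homD[OF hom_lift3])
      then have "x * y \<in> kxyz" unfolding kxyz_def by (metis rangeI)
      moreover have "TT v4 (x * y) = x * y" using mult by (simp add: homD[OF hom_TT])
      ultimately show ?case by simp
    qed
  qed
qed

end

theorem lemma3:
  fixes \<alpha> :: "'a::field_gcd poly" and \<beta> :: "'a poly poly" and \<gamma> :: "'a R4"
  assumes "CHAR('a) = 2" and "\<alpha> \<noteq> 0" and "\<beta> \<noteq> 0"
  defines "d \<equiv> gcd [:\<alpha>:] \<beta>"
  defines "a \<equiv> [:\<alpha>:] div d"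
  defines "b \<equiv> \<beta> div d"
  defines "f1 \<equiv> varX"
  defines "f2 \<equiv> varY ^ 2 + lift1 \<alpha> * varY"
  defines "f3 \<equiv> varZ ^ 2 + subst_xy \<beta> f2 * varZ"
  defines "f4 \<equiv> lift2 a * varZ + subst_xy b f2 * varY"
  defines "T \<equiv> (\<lambda>f. subst4 f varX (varY + lift1 \<alpha>) (varZ + subst_xy \<beta> f2)
                      (varW + subst4 \<gamma> f1 f2 f3 f4))"
  shows "{f \<in> kxyz. T f = f} = gen_alg4 f1 f2 f3 f4"
  proof -
  interpret L \<alpha> \<beta> by unfold_locales (use assms in auto)
  have dd: "d = dd" "a = aa" "b = bb" by (simp_all add: d_def dd_def a_def aa_def b_def bb_def)
  have ff: "f1 = varX" "f2 = F2" "f3 = F3" "f4 = F4"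
    by (simp_all add: f1_def f2_def F2_def f3_def F3_def f4_def F4_def dd)
  have TT: "T = TT (varW + subst4 \<gamma> f1 f2 f3 f4)"
    by (rule ext) (simp add: T_def TT_def ff)
  show ?thesis unfolding TT gen_alg4_eq ff by (rule main)
qed

end
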